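(* Let $q\in(0,1)$ and let $\alpha,p\ge0$ be integers. For every integer $t$ with $0\le t\le p$, $$\sum_{M\in M^{(\alpha)}_{p,0}(t)}q^{\mathrm{cr}(M)}=\begin{bmatrix} p+\alpha\\ t\end{bmatrix}_q\begin{bmatrix} p\\ t\end{bmatrix}_q[t]_q!.$$
   Context: $[n]_q=\frac{1-q^n}{1-q}$, $[n]_q!=\prod_{m=1}^n[m]_q$, $\begin{bmatrix} n\\ m\end{bmatrix}_q=\frac{[n]_q!}{[m]_q![n-m]_q!}$ ($=0$ if $m>n$). Bipartite matchings: for integers $n,j,\alpha\ge0$, let $T_-=\{-\alpha-j,\dots,-1\}$, $T_+=\{1,\dots,n\}$ (top row), $B_-=\{-\tilde j,\dots,-\tilde 1\}$, $B_+=\{\tilde1,\dots,\tilde n\}$ (bottom row; $\tilde m$ is a formal copy of the integer $m$, bottom vertices compared via these integers). A bipartite matching is a set partition of $T_-\cup T_+\cup B_-\cup B_+$ into singletons (isolated vertices) and blocks $\{a,\tilde b\}$ with $a$ top, $\tilde b$ bottom (edges, written $(a,\tilde b)$). $M^{(\alpha)}_{n,j}$ is the set of such matchings with no edge between $T_-$ and $B_-$; $M^{(\alpha)}_{n,j}(l)$ its subset with exactly $l$ edges. The crossing number $\mathrm{cr}(M)$ is the total number of: (C1) unordered pairs of edges $(a,\tilde b),(c,\tilde d)$ with $a<c$ and $d<b$; (C2) pairs of an edge $(a,\tilde b)$ and an isolated top vertex $c$ with $c<a$; (C3) pairs of an edge $(a,\tilde b)$ and an isolated bottom vertex $\tilde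 d$ with $d<b$. *)

theory Defs
  imports Complex_Main
begin

definition qint :: "real \<Rightarrow> nat \<Rightarrow> real" where
  "qint q n = (1 - q ^ n) / (1 - q)"

definition qfact :: "real \<Rightarrow> nat \<Rightarrow> real" where
  "qfact q n = (\<Prod>m = 1..n. qint q m)"

definition qbinom :: "real \<Rightarrow> nat \<Rightarrow> nat \<Rightarrow> real" where
  "qbinom q n m = (if m > n then 0 else qfact q n / (qfact q m * qfact q (n - m)))"

text \<open>Vertices are labelled by integers; a bottom vertex ~m is represented by the integer m.\<close>

definition top_verts :: "nat \<Rightarrow> nat \<Rightarrow> nat \<Rightarrow> int set" where
  "top_verts \<alpha> n j = {-(int \<alpha> + int j)..-1} \<union> {1..int n}"

definition bot_verts :: "nat \<Rightarrow> nat \<Rightarrow> int set" where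
  "bot_verts n j = {-int j..-1} \<union> {1..int n}"

text \<open>A bipartite matching is its set of edges (a, b) (a top, ~b bottom), each vertex
  in at most one edge; the remaining vertices are isolated.  No edge between T_- and B_-.\<close>
definition matchings :: "nat \<Rightarrow> nat \<Rightarrow> nat \<Rightarrow> (int \<times> int) set set" where
  "matchings \<alpha> n j = {M. M \<subseteq> top_verts \<alpha> n j \<times> bot_verts n j \<and>
      (\<forall>(a, b)\<in>M. \<forall>(c, d)\<in>M. (a = c \<longleftrightarrow> b = d)) \<and>
      (\<forall>(a, b)\<in>M. \<not> (a < 0 \<and> b < 0))}"

definition matchings_l :: "nat \<Rightarrow> nat \<Rightarrow> nat \<Rightarrow> nat \<Rightarrow> (int \<times> int) set set" where
  "matchings_l \<alpha> n j l = {M \<in> matchings \<alpha> n j. card M = l}"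

definition cr :: "nat \<Rightarrow> nat \<Rightarrow> nat \<Rightarrow> (int \<times> int) set \<Rightarrow> nat" where
  "cr \<alpha> n j M =
     card {(e, f). e \<in> M \<and> f \<in> M \<and> fst e < fst f \<and> snd f < snd e}
   + card {(e, c). e \<in> M \<and> c \<in> top_verts \<alpha> n j \<and> c \<notin> fst ` M \<and> c < fst e}
   + card {(e, d). e \<in> M \<and> d \<in> bot_verts n j \<and> d \<notin> snd ` M \<and> d < snd e}"

end

theory Submission
  imports Defs
begin

definition mat :: "int set \<Rightarrow> int set \<Rightarrow> (int \<times> int) set set" where
  "mat A B = {M. M \<subseteq> A \<times> B \<and> (\<forall>(a, b)\<in>M. \<forall>(c, d)\<in>M. (a = c \<longleftrightarrow> b = d))}"

definition c1 :: "(int \<times> int) set \<Rightarrow> nat" where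
  "c1 M = card {(e, f). e \<in> M \<and> f \<in> M \<and> fst e < fst f \<and> snd f < snd e}"
definition c2 :: "int set \<Rightarrow> (int \<times> int) set \<Rightarrow> nat" where
  "c2 A M = card {(e, c). e \<in> M \<and> c \<in> A \<and> c \<notin> fst ` M \<and> c < fst e}"
definition c3 :: "int set \<Rightarrow> (int \<times> int) set \<Rightarrow> nat" where
  "c3 B M = card {(e, d). e \<in> M \<and> d \<in> B \<and> d \<notin> snd ` M \<and> d < snd e}"
definition crg :: "int set \<Rightarrow> int set \<Rightarrow> (int \<times> int) set \<Rightarrow> nat" where
  "crg A B M = c1 M + c2 A M + c3 B M"

lemma mat_iff: "M \<in> mat A B \<longleftrightarrow> M \<subseteq> A \<times> B \<and> (\<forall>x\<in>M. \<forall>y\<in>M. (fst x = fst y) = (snd x = snd y))"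
  unfolding mat_def by (simp add: case_prod_beta)

lemma L1:
  assumes "finite A'" "finite M" "a \<notin> A'" "\<forall>x\<in>A'. a < x" "M \<subseteq> A' \<times> B"
  shows "c2 (insert a A') M = c2 A' M + card M"
proof -
  have eq: "{(e, c). e \<in> M \<and> c \<in> insert a A' \<and> c \<notin> fst ` M \<and> c < fst e}
     = {(e, c). e \<in> M \<and> c \<in> A' \<and> c \<notin> fst ` M \<and> c < fst e} \<union> (\<lambda>e. (e, a)) ` M"
    using assms by fastforce
  have fin: "finite {(e, c). e \<in> M \<and> c \<in> A' \<and> c \<notin> fst ` M \<and> c < fst e}"
    by (rule finite_subset[of _ "M \<times> A'"]) (use assms in auto)
  have disj: "{(e, c). e \<in> M \<and> c \<in> A' \<and> c \<notin> fst ` M \<and> c < fst e} \<inter> (\<lambda>e. (e, a)) ` M = {}"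
    using assms by auto
  have "card ((\<lambda>e. (e, a)) ` M) = card M"
    by (rule card_image) (auto simp: inj_on_def)
  then show ?thesis unfolding c2_def eq
    using card_Un_disjoint[OF fin _ disj] assms by simp
qed

lemma L2a:
  assumes "finite M'" "\<forall>x\<in>fst ` M'. a < x"
  shows "c1 (insert (a, b) M') = c1 M' + card {f\<in>M'. snd f < b}"
proof -
  have eq: "{(e, f). e \<in> insert (a, b) M' \<and> f \<in> insert (a, b) M' \<and> fst e < fst f \<and> snd f < snd e}
    = {(e, f). e \<in> M' \<and> f \<in> M' \<and> fst e < fst f \<and> snd f < snd e} \<union> (\<lambda>f. ((a, b), f)) ` {f\<in>M'. snd f < b}"
    using assms by force
  have fin: "finite {(e, f). e \<in> M' \<and> f \<in> M' \<and> fst e < fst f \<and> snd f < snd e}"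
    by (rule finite_subset[of _ "M' \<times> M'"]) (use assms in auto)
  have disj: "{(e, f). e \<in> M' \<and> f \<in> M' \<and> fst e < fst f \<and> snd f < snd e} \<inter> (\<lambda>f. ((a, b), f)) ` {f\<in>M'. snd f < b} = {}"
    using assms by force
  have "card ((\<lambda>f. ((a, b), f)) ` {f\<in>M'. snd f < b}) = card {f\<in>M'. snd f < b}"
    by (rule card_image) (auto simp: inj_on_def)
  then show ?thesis unfolding c1_def eq
    using card_Un_disjoint[OF fin _ disj] assms by simp
qed

lemma L2b:
  assumes "a \<notin> A'" "\<forall>x\<in>A'. a < x" "M' \<subseteq> A' \<times> B'"
  shows "c2 (insert a A') (insert (a, b) M') = c2 A' M'"
proof -
  have "{(e, c). e \<in> insert (a, b) M' \<and> c \<in> insert a A' \<and> c \<notin> fst ` insert (a, b) M' \<and> c < fst e}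
     = {(e, c). e \<in> M' \<and> c \<in> A' \<and> c \<notin> fst ` M' \<and> c < fst e}"
    using assms by force
  then show ?thesis unfolding c2_def by simp
qed

lemma L2c:
  assumes "finite B" "finite M'" "b \<in> B" "M' \<subseteq> A' \<times> (B - {b})"
  shows "c3 B (insert (a, b) M') = c3 (B - {b}) M' + card {d\<in>B. d < b \<and> d \<notin> snd ` M'}"
proof -
  have eq: "{(e, d). e \<in> insert (a, b) M' \<and> d \<in> B \<and> d \<notin> snd ` insert (a, b) M' \<and> d < snd e}
    = {(e, d). e \<in> M' \<and> d \<in> B - {b} \<and> d \<notin> snd ` M' \<and> d < snd e} \<union> (\<lambda>d. ((a, b), d)) ` {d\<in>B. d < b \<and> d \<notin> snd ` M'}"
    using assms by force
  have fin: "finite {(e, d). e \<in> M' \<and> d \<in> B - {b} \<and> d \<notin> snd ` M' \<and> d < snd e}"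
    by (rule finite_subset[of _ "M' \<times> B"]) (use assms in auto)
  have disj: "{(e, d). e \<in> M' \<and> d \<in> B - {b} \<and> d \<notin> snd ` M' \<and> d < snd e} \<inter> (\<lambda>d. ((a, b), d)) ` {d\<in>B. d < b \<and> d \<notin> snd ` M'} = {}"
    using assms by force
  have "card ((\<lambda>d. ((a, b), d)) ` {d\<in>B. d < b \<and> d \<notin> snd ` M'}) = card {d\<in>B. d < b \<and> d \<notin> snd ` M'}"
    by (rule card_image) (auto simp: inj_on_def)
  then show ?thesis unfolding c3_def eq
    using card_Un_disjoint[OF fin _ disj] assms by simp
qed

lemma L2d:
  assumes "finite B" "finite M'" "M' \<in> mat A' (B - {b})"
  shows "card {f\<in>M'. snd f < b} + card {d\<in>B. d < b \<and> d \<notin> snd ` M'} = card {d\<in>B. d < b}"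
proof -
  have inj: "inj_on snd M'" using assms(3) unfolding mat_iff inj_on_def by (metis prod.expand)
  have "card {f\<in>M'. snd f < b} = card (snd ` {f\<in>M'. snd f < b})"
    by (rule card_image[symmetric]) (rule inj_on_subset[OF inj], auto)
  also have "snd ` {f\<in>M'. snd f < b} = {d \<in> snd ` M'. d < b}" by auto
  finally have 1: "card {f\<in>M'. snd f < b} = card {d \<in> snd ` M'. d < b}" .
  have sub: "snd ` M' \<subseteq> B" using assms(3) unfolding mat_iff by auto
  have eq: "{d\<in>B. d < b} = {d \<in> snd ` M'. d < b} \<union> {d\<in>B. d < b \<and> d \<notin> snd ` M'}"
    using sub by auto
  have "card {d\<in>B. d < b} = card {d \<in> snd ` M'. d < b} + card {d\<in>B. d < b \<and> d \<notin> snd ` M'}"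
    unfolding eq by (rule card_Un_disjoint) (use assms in auto)
  then show ?thesis using 1 by simp
qed


lemma rank_sum:
  fixes x :: real and B :: "int set"
  shows "finite B \<Longrightarrow> (\<Sum>b\<in>B. x ^ card {d\<in>B. d < b}) = (\<Sum>k<card B. x ^ k)"
proof (induction "card B" arbitrary: B)
  case 0
  then show ?case by simp
next
  case (Suc n)
  define m where "m = Max B"
  have ne: "B \<noteq> {}" using Suc by auto
  have mB: "m \<in> B" using Suc ne by (simp add: m_def)
  define B' where "B' = B - {m}"
  have B: "B = insert m B'" "m \<notin> B'" using mB by (auto simp: B'_def)
  have fin': "finite B'" using Suc by (simp add: B'_def)
  have cB': "card B' = n" using Suc mB by (simp add: B'_def)
  have ge: "\<forall>b\<in>B. b \<le> m" using Suc by (simp add: m_def)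
  have r1: "\<And>b. b \<in> B' \<Longrightarrow> {d\<in>B. d < b} = {d\<in>B'. d < b}"
    using ge mB by (auto simp: B'_def)
  have r2: "{d\<in>B. d < m} = B'" using ge mB by (auto simp: B'_def)
  have "(\<Sum>b\<in>B. x ^ card {d\<in>B. d < b}) = x ^ card B' + (\<Sum>b\<in>B'. x ^ card {d\<in>B. d < b})"
    using B fin' r2 by simp
  also have "(\<Sum>b\<in>B'. x ^ card {d\<in>B. d < b}) = (\<Sum>b\<in>B'. x ^ card {d\<in>B'. d < b})"
    by (rule sum.cong) (auto simp: r1)
  also have "\<dots> = (\<Sum>k<n. x ^ k)" using Suc.hyps(1)[of B'] fin' cB' by simp
  finally show ?case using cB' Suc.hyps(2)[symmetric] by simp
qed

lemma qfact_Suc: "qfact q (Suc n) = qfact q n * qint q (Suc n)"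
  unfolding qfact_def by (simp add: prod.nat_ivl_Suc')

lemma qint_pos: "0 < q \<Longrightarrow> q < (1::real) \<Longrightarrow> 0 < n \<Longrightarrow> 0 < qint q n"
  unfolding qint_def by (simp add: power_less_one_iff)

lemma qfact_pos: "0 < q \<Longrightarrow> q < (1::real) \<Longrightarrow> 0 < qfact q n"
  by (induction n) (auto simp: qfact_Suc qint_pos, simp add: qfact_def)

lemma qbinom_0: "0 < q \<Longrightarrow> q < (1::real) \<Longrightarrow> qbinom q n 0 = 1"
proof -
  assume "0 < q" "q < (1::real)"
  then have "qfact q n \<noteq> 0" using qfact_pos[of q n] by simp
  moreover have "qfact q 0 = 1" by (simp add: qfact_def)
  ultimately show ?thesis by (simp add: qbinom_def)
qed

lemma alg1:
  fixes a b c d e x :: real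
  assumes "a > 0" "b > 0" "c > 0" "d > 0" "e > 0"
  shows "a * (b + x * c) / (d * b * (e * c)) = a / (d * (e * c)) + x * (a / (d * b * e))"
  using assms by (simp add: field_simps)

lemma qpascal:
  assumes q: "0 < q" "q < (1::real)"
  shows "qbinom q (Suc n) (Suc k) = qbinom q n k + q ^ Suc k * qbinom q n (Suc k)"
proof (cases "k < n")
  case True
  from less_imp_Suc_add[OF True] obtain r where n: "n = Suc (k + r)" by blast
  have d1: "Suc n - Suc k = Suc r" "n - k = Suc r" "n - Suc k = r" using n by auto
  have p: "0 < qfact q k" "0 < qfact q r" "0 < qfact q n" using qfact_pos q by auto
  have i: "0 < qint q (Suc k)" "0 < qint q (Suc r)" using qint_pos q by auto
  have sn: "Suc n = Suc k + Suc r" using n by simp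
  have num: "1 - q ^ Suc n = (1 - q ^ Suc k) + q ^ Suc k * (1 - q ^ Suc r)"
    unfolding sn power_add by (simp add: algebra_simps)
  have key: "qint q (Suc n) = qint q (Suc k) + q ^ Suc k * qint q (Suc r)"
    unfolding qint_def num by (simp add: add_divide_distrib)
  have "qbinom q (Suc n) (Suc k) = qfact q n * (qint q (Suc k) + q ^ Suc k * qint q (Suc r)) /
     (qfact q k * qint q (Suc k) * (qfact q r * qint q (Suc r)))"
    using True unfolding qbinom_def d1 by (simp add: qfact_Suc key)
  also have "\<dots> = qfact q n / (qfact q k * (qfact q r * qint q (Suc r))) +
      q ^ Suc k * (qfact q n / (qfact q k * qint q (Suc k) * qfact q r))"
    by (rule alg1) (use p i in auto)
  also have "\<dots> = qbinom q n k + q ^ Suc k * qbinom q n (Suc k)"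
    using True unfolding qbinom_def d1 by (simp add: qfact_Suc)
  finally show ?thesis .
next
  case False
  show ?thesis
  proof (cases "k = n")
    case True
    have "qfact q (Suc n) \<noteq> 0" "qfact q n \<noteq> 0" using qfact_pos[OF q] by (metis less_irrefl)+
    moreover have "qfact q 0 = 1" by (simp add: qfact_def)
    ultimately show ?thesis using True by (simp add: qbinom_def)
  next
    case False
    then show ?thesis using \<open>\<not> k < n\<close> by (simp add: qbinom_def)
  qed
qed

lemma qP:
  assumes q: "0 < q" "q < (1::real)"
  shows "qbinom q m (Suc t) * qfact q (Suc t) = qint q m * (qbinom q (m - 1) t * qfact q t)"
proof (cases m)
  case 0
  then show ?thesis by (simp add: qbinom_def qint_def)
next
  case (Suc m')
  show ?thesis
  proof (cases "t \<le> m'")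
    case True
    have p: "0 < qfact q t" "0 < qfact q (m' - t)" "0 < qfact q m'" using qfact_pos q by auto
    have i: "0 < qint q (Suc t)" using qint_pos q by auto
    have "Suc m' - Suc t = m' - t" by simp
    then show ?thesis using True p i unfolding Suc qbinom_def
      by (simp add: qfact_Suc)
  next
    case False
    then show ?thesis unfolding Suc qbinom_def by simp
  qed
qed


lemma mat_sub: "mat A B \<subseteq> Pow (A \<times> B)"
  by (auto simp: mat_iff)

lemma finite_mat: "finite A \<Longrightarrow> finite B \<Longrightarrow> finite (mat A B)"
  by (rule finite_subset[OF mat_sub]) simp

lemma mat_subD: "M \<in> mat A B \<Longrightarrow> M \<subseteq> A \<times> B"
  by (simp add: mat_iff)

lemma finite_in_mat: assumes "finite A" "finite B" "M \<in> mat A B" shows "finite M"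
  using finite_subset[OF mat_subD[OF assms(3)]] assms(1,2) by simp

lemma zero_case:
  assumes q: "0 < q" "q < (1::real)" and fin: "finite A" "finite B"
  shows "(\<Sum>M\<in>{M\<in>mat A B. card M = 0}. q ^ crg A B M) = qbinom q (card A) 0 * (qbinom q (card B) 0 * qfact q 0)"
proof -
  have e: "{} \<in> mat A B" by (simp add: mat_iff)
  have "M = {}" if "M \<in> mat A B" "card M = 0" for M
    using that finite_in_mat[OF fin that(1)] by simp
  then have "{M\<in>mat A B. card M = 0} = {{}}" using e by auto
  moreover have "crg A B {} = 0" by (simp add: crg_def c1_def c2_def c3_def)
  moreover have "qfact q 0 = 1" by (simp add: qfact_def)
  ultimately show ?thesis using qbinom_0[OF q] by simp
qed

lemma main:
  assumes q: "0 < q" "q < (1::real)"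
  shows "finite A \<Longrightarrow> finite B \<Longrightarrow> card A = n \<Longrightarrow>
    (\<Sum>M\<in>{M\<in>mat A B. card M = t}. q ^ crg A B M) = qbinom q (card A) t * (qbinom q (card B) t * qfact q t)"
proof (induction n arbitrary: A B t)
  case 0
  show ?case
  proof (cases t)
    case 0
    then show ?thesis using zero_case[OF q "0.prems"(1,2)] by simp
  next
    case (Suc t')
    have "A = {}" using "0.prems" by simp
    then have E: "{M\<in>mat A B. card M = t} = {}" using Suc by (auto simp: mat_iff)
    show ?thesis unfolding E using Suc \<open>A = {}\<close> by (simp add: qbinom_def)
  qed
next
  case (Suc n A B t)
  show ?case
  proof (cases t)
    case 0
    then show ?thesis using zero_case[OF q Suc.prems(1,2)] by simp
  next
    case (Suc t')
    note t = this
    have finA: "finite A" and finB: "finite B" using Suc.prems by auto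
    have ne: "A \<noteq> {}" using Suc.prems by auto
    define a where "a = Min A"
    define A' where "A' = A - {a}"
    have aA: "a \<in> A" using finA ne by (simp add: a_def)
    have Aeq: "A = insert a A'" and aA': "a \<notin> A'" using aA by (auto simp: A'_def)
    have lt: "\<forall>x\<in>A'. a < x" using finA unfolding A'_def a_def
      by (metis DiffE Min_le order_less_le singletonI)
    have finA': "finite A'" using finA by (simp add: A'_def)
    have cA': "card A' = n" using Suc.prems aA by (simp add: A'_def)
    define T where "T b = {M\<in>mat A' (B - {b}). card M = t'}" for b
    define S1 where "S1 = {M\<in>mat A' B. card M = t}"
    define S2 where "S2 = (\<Union>b\<in>B. insert (a, b) ` T b)"
    have split: "{M\<in>mat A B. card M = t} = S1 \<union> S2"
    proof
      show "{M\<in>mat A B. card M = t} \<subseteq> S1 \<union> S2"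
      proof
        fix M assume M: "M \<in> {M\<in>mat A B. card M = t}"
        have Msub: "M \<subseteq> A \<times> B" and Mm: "\<forall>x\<in>M. \<forall>y\<in>M. (fst x = fst y) = (snd x = snd y)"
          and cM: "card M = t" using M by (auto simp: mat_iff)
        show "M \<in> S1 \<union> S2"
        proof (cases "a \<in> fst ` M")
          case False
          have "M \<subseteq> A' \<times> B"
          proof
            fix x assume x: "x \<in> M"
            then have "fst x \<noteq> a" using False by (metis imageI)
            moreover have "x \<in> A \<times> B" using x Msub by blast
            ultimately show "x \<in> A' \<times> B" unfolding A'_def by (cases x) simp
          qed
          then have "M \<in> S1" using Mm cM by (simp add: S1_def mat_iff)
          then show ?thesis by simp
        next
          case True
          then obtain b where ab: "(a, b) \<in> M" by force
          have bB: "b \<in> B" using ab Msub by auto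
          define M' where "M' = M - {(a, b)}"
          have "M' \<subseteq> A' \<times> (B - {b})"
          proof
            fix e assume e: "e \<in> M'"
            obtain c d where cd: "e = (c, d)" by force
            have cdM: "(c, d) \<in> M" and ne: "(c, d) \<noteq> (a, b)" using e cd by (auto simp: M'_def)
            have "(c = a) = (d = b)" using Mm[rule_format, OF cdM ab] by simp
            then have "c \<noteq> a" "d \<noteq> b" using ne by auto
            then show "e \<in> A' \<times> (B - {b})" using cd cdM Msub Aeq by auto
          qed
          moreover have "finite M" using finite_in_mat[OF finA finB] M by auto
          then have "card M' = t'" using cM ab t by (simp add: M'_def)
          moreover have "\<forall>x\<in>M'. \<forall>y\<in>M'. (fst x = fst y) = (snd x = snd y)" using Mm by (simp add: M'_def)
          ultimately have "M' \<in> T b" unfolding T_def mat_iff by simp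
          moreover have "M = insert (a, b) M'" using ab by (auto simp: M'_def)
          ultimately show ?thesis using bB unfolding S2_def by blast
        qed
      qed
    next
      show "S1 \<union> S2 \<subseteq> {M\<in>mat A B. card M = t}"
      proof
        fix M assume "M \<in> S1 \<union> S2"
        then show "M \<in> {M\<in>mat A B. card M = t}"
        proof
          assume "M \<in> S1"
          then have "M \<subseteq> A' \<times> B" "\<forall>x\<in>M. \<forall>y\<in>M. (fst x = fst y) = (snd x = snd y)" "card M = t"
            by (auto simp: S1_def mat_iff)
          moreover have "A' \<times> B \<subseteq> A \<times> B" using Aeq by auto
          ultimately show ?thesis by (simp add: mat_iff)
        next
          assume "M \<in> S2"
          then obtain b M' where bB: "b \<in> B" and M': "M' \<in> T b" and M: "M = insert (a, b) M'"
            by (auto simp: S2_def)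
          have sub: "M' \<subseteq> A' \<times> (B - {b})" and Mm: "\<forall>x\<in>M'. \<forall>y\<in>M'. (fst x = fst y) = (snd x = snd y)"
            and cM: "card M' = t'" using M' by (auto simp: T_def mat_iff)
          have nin: "(a, b) \<notin> M'" using sub aA' by auto
          have fM: "finite M'" using finite_subset[OF sub] finA' finB by auto
          have "M \<subseteq> A \<times> B" using sub M Aeq bB by auto
          moreover have "\<forall>x\<in>M. \<forall>y\<in>M. (fst x = fst y) = (snd x = snd y)"
          proof (intro ballI)
            fix x y assume xy: "x \<in> M" "y \<in> M"
            have h: "\<And>z. z \<in> M' \<Longrightarrow> fst z \<noteq> a \<and> snd z \<noteq> b" using sub aA' by auto
            from xy have "x = (a, b) \<or> x \<in> M'" "y = (a, b) \<or> y \<in> M'" unfolding M by auto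
            then show "(fst x = fst y) = (snd x = snd y)"
            proof (elim disjE)
              assume "x \<in> M'" "y \<in> M'" then show ?thesis using Mm by blast
            next
              assume "x = (a, b)" "y \<in> M'" then show ?thesis using h[of y] by auto
            next
              assume "x \<in> M'" "y = (a, b)" then show ?thesis using h[of x] by auto
            qed simp
          qed
          moreover have "card M = t" using M nin fM cM t by simp
          ultimately show ?thesis by (simp add: mat_iff)
        qed
      qed
    qed
    have fin1: "finite S1" using finite_mat[OF finA' finB] by (simp add: S1_def)
    have finT: "\<And>b. finite (T b)" using finite_mat[OF finA', of "B - {_}"] finB by (simp add: T_def)
    have fin2: "finite S2" using finB finT by (simp add: S2_def)
    have disj: "S1 \<inter> S2 = {}"
    proof -
      have "a \<notin> fst ` M" if "M \<in> S1" for M using that aA' by (auto simp: S1_def mat_iff)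
      moreover have "a \<in> fst ` M" if "M \<in> S2" for M using that by (force simp: S2_def)
      ultimately show ?thesis by blast
    qed
    have sum1: "(\<Sum>M\<in>S1. q ^ crg A B M) = q ^ t * (qbinom q n t * (qbinom q (card B) t * qfact q t))"
    proof -
      have "(\<Sum>M\<in>S1. q ^ crg A B M) = (\<Sum>M\<in>S1. q ^ t * q ^ crg A' B M)"
      proof (rule sum.cong)
        fix M assume M: "M \<in> S1"
        then have sub: "M \<subseteq> A' \<times> B" and fM: "finite M" and cM: "card M = t"
          using finite_in_mat[OF finA' finB] by (auto simp: S1_def mat_iff)
        have "crg A B M = crg A' B M + t"
          unfolding crg_def Aeq L1[OF finA' fM aA' lt sub] cM by simp
        then show "q ^ crg A B M = q ^ t * q ^ crg A' B M" by (simp add: power_add)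
      qed simp
      also have "\<dots> = q ^ t * (\<Sum>M\<in>S1. q ^ crg A' B M)" by (simp add: sum_distrib_left)
      also have "(\<Sum>M\<in>S1. q ^ crg A' B M) = qbinom q n t * (qbinom q (card B) t * qfact q t)"
        using Suc.IH[OF finA' finB cA', of t] cA' by (simp add: S1_def)
      finally show ?thesis .
    qed
    have inner: "(\<Sum>M\<in>insert (a, b) ` T b. q ^ crg A B M)
        = q ^ card {d\<in>B. d < b} * (qbinom q n t' * (qbinom q (card B - 1) t' * qfact q t'))"
      if bB: "b \<in> B" for b
    proof -
      have nin: "(a, b) \<notin> M" if "M \<in> T b" for M
        using that aA' by (auto simp: T_def mat_iff)
      have inj: "inj_on (insert (a, b)) (T b)"
      proof (rule inj_onI)
        fix M1 M2 assume "M1 \<in> T b" "M2 \<in> T b" "insert (a, b) M1 = insert (a, b) M2"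
        then show "M1 = M2" using nin by (metis Diff_insert_absorb)
      qed
      have "(\<Sum>M\<in>insert (a, b) ` T b. q ^ crg A B M) = (\<Sum>M'\<in>T b. q ^ crg A B (insert (a, b) M'))"
        by (simp add: sum.reindex[OF inj])
      also have "\<dots> = (\<Sum>M'\<in>T b. q ^ card {d\<in>B. d < b} * q ^ crg A' (B - {b}) M')"
      proof (rule sum.cong)
        fix M' assume M': "M' \<in> T b"
        have mm: "M' \<in> mat A' (B - {b})" using M' by (simp add: T_def)
        have sub: "M' \<subseteq> A' \<times> (B - {b})" using mm by (rule mat_subD)
        have fM: "finite M'" using finite_subset[OF sub] finA' finB by auto
        have fst: "\<forall>x\<in>fst ` M'. a < x" using sub lt by auto
        have "crg A B (insert (a, b) M') = crg A' (B - {b}) M' + card {d\<in>B. d < b}"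
          unfolding crg_def Aeq L2a[OF fM fst] L2b[OF aA' lt sub] L2c[OF finB fM bB sub]
          using L2d[OF finB fM mm] by simp
        then show "q ^ crg A B (insert (a, b) M') = q ^ card {d\<in>B. d < b} * q ^ crg A' (B - {b}) M'"
          by (simp add: power_add)
      qed simp
      also have "\<dots> = q ^ card {d\<in>B. d < b} * (\<Sum>M'\<in>T b. q ^ crg A' (B - {b}) M')"
        by (simp add: sum_distrib_left)
      also have "(\<Sum>M'\<in>T b. q ^ crg A' (B - {b}) M') = qbinom q n t' * (qbinom q (card B - 1) t' * qfact q t')"
        using Suc.IH[OF finA' _ cA', of "B - {b}" t'] finB bB cA' by (simp add: T_def)
      finally show ?thesis .
    qed
    have sum2: "(\<Sum>M\<in>S2. q ^ crg A B M) = qint q (card B) * (qbinom q n t' * (qbinom q (card B - 1) t' * qfact q t'))"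
    proof -
      have dj: "\<forall>i\<in>B. \<forall>j\<in>B. i \<noteq> j \<longrightarrow> insert (a, i) ` T i \<inter> insert (a, j) ` T j = {}"
      proof (intro ballI impI)
        fix i j assume "i \<in> B" "j \<in> B" "i \<noteq> j"
        have "(a, i) \<notin> M" if "M \<in> T j" for M
          using that aA' by (auto simp: T_def mat_iff)
        then show "insert (a, i) ` T i \<inter> insert (a, j) ` T j = {}" using \<open>i \<noteq> j\<close> by blast
      qed
      have "(\<Sum>M\<in>S2. q ^ crg A B M) = (\<Sum>b\<in>B. \<Sum>M\<in>insert (a, b) ` T b. q ^ crg A B M)"
        unfolding S2_def by (rule sum.UNION_disjoint[OF finB _ dj]) (simp add: finT)
      also have "\<dots> = (\<Sum>b\<in>B. q ^ card {d\<in>B. d < b} * (qbinom q n t' * (qbinom q (card B - 1) t' * qfact q t')))"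
        by (rule sum.cong) (simp_all add: inner)
      also have "\<dots> = (\<Sum>b\<in>B. q ^ card {d\<in>B. d < b}) * (qbinom q n t' * (qbinom q (card B - 1) t' * qfact q t'))"
        by (simp add: sum_distrib_right)
      also have "(\<Sum>b\<in>B. q ^ card {d\<in>B. d < b}) = qint q (card B)"
        using rank_sum[OF finB, of q] q by (simp add: sum_gp_strict qint_def)
      finally show ?thesis .
    qed
    have "(\<Sum>M\<in>{M\<in>mat A B. card M = t}. q ^ crg A B M) = (\<Sum>M\<in>S1. q ^ crg A B M) + (\<Sum>M\<in>S2. q ^ crg A B M)"
      unfolding split by (rule sum.union_disjoint[OF fin1 fin2 disj])
    also have "\<dots> = qbinom q (Suc n) t * (qbinom q (card B) t * qfact q t)"
      unfolding sum1 sum2 t qpascal[OF q] qP[OF q] by (simp add: algebra_simps)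
    finally show ?thesis using Suc.prems by simp
  qed
qed

theorem lemma2p5:
  fixes q :: real and \<alpha> p t :: nat
  assumes "0 < q" and "q < 1" and "t \<le> p"
  shows "(\<Sum>M\<in>matchings_l \<alpha> p 0 t. q ^ cr \<alpha> p 0 M)
         = qbinom q (p + \<alpha>) t * qbinom q p t * qfact q t"
proof -
  have m: "matchings_l \<alpha> p 0 t = {M\<in>mat (top_verts \<alpha> p 0) (bot_verts p 0). card M = t}"
  proof -
    have "\<forall>(a, b)\<in>M. \<not> (a < 0 \<and> b < 0)" if "M \<subseteq> top_verts \<alpha> p 0 \<times> bot_verts p 0" for M
      using that by (auto simp: bot_verts_def)
    then show ?thesis unfolding matchings_l_def matchings_def mat_def by blast
  qed
  have c: "cr \<alpha> p 0 M = crg (top_verts \<alpha> p 0) (bot_verts p 0) M" for M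
    unfolding cr_def crg_def c1_def c2_def c3_def ..
  have ct: "card (top_verts \<alpha> p 0) = p + \<alpha>"
  proof -
    have "top_verts \<alpha> p 0 = {- int \<alpha>..-1} \<union> {1..int p}" by (simp add: top_verts_def)
    moreover have "card ({- int \<alpha>..-1} \<union> {1..int p}) = \<alpha> + p"
      by (subst card_Un_disjoint) auto
    ultimately show ?thesis by simp
  qed
  have cb: "card (bot_verts p 0) = p" by (simp add: bot_verts_def)
  have ft: "finite (top_verts \<alpha> p 0)" "finite (bot_verts p 0)" by (auto simp: top_verts_def bot_verts_def)
  show ?thesis unfolding m c using main[OF assms(1,2) ft refl, of t] ct cb by simp
qed

end
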